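(* Let $K$ be an oriented Legendrian knot and $(X,\ast,u,d)$ a finite block GL-rack, with blocks $A_1,\dots,A_n$ each of size $c$, induced GL-quandle $(\widetilde X,\tilde\ast,\tilde u,\tilde d)$ and projection $\pi\colon X\to\widetilde X$. If $\phi\in\operatorname{Hom}(\operatorname{GLR}(K),X)$ then $\pi\circ\phi\in\operatorname{Hom}(\operatorname{GLR}(K),\widetilde X)$. Furthermore, $$\operatorname{Col}_X(K)=\sum_{\psi\in\operatorname{Hom}(\operatorname{GLR}(K),\widetilde X)}|\operatorname{Lift}(\psi)|,$$ and for every such $\psi$, $|\operatorname{Lift}(\psi)|\in\{0,c\}$.
   Context: A rack is a set $X$ with a binary operation $\ast$ such that for every $y\in X$ the map $x\mapsto x\ast y$ is a bijection of $X$ and $(x\ast y)\ast z=(x\ast z)\ast(y\ast z)$ for all $x,y,z$. A GL-rack is a quadruple $(X,\ast,u,d)$ where $(X,\ast)$ is a rack and $u,d\colon X\to X$ are maps such that for all $x,y\in X$: $u(d(x\ast x))=d(u(x\ast x))=x$; $u(x\ast y)=u(x)\ast y$ and $d(x\ast y)=d(x)\ast y$; $x\ast u(y)=x\ast d(y)=x\ast y$. A GL-quandle is a GL-rack with $x\ast x=x$. Homomorphisms of GL-racks are maps preserving $\ast$, $u$, $d$. The diagonal map is $\Delta(x)=x\ast x$; for finite $X$ it is a bijection with $\Delta=(u\circ d)^{-1}$. A finite GL-rack is a block GL-rack if all cycles in the disjoint cycle decomposition $\Delta=\alpha_1\cdots\alpha_n$ (fixed points counted as $1$-cycles) have the same length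 $c$; the blocks are $A_i=\operatorname{supp}(\alpha_i)$. The induced GL-quandle is $\widetilde X=\{a_1,\dots,a_n\}$ with $\pi(A_i)=\{a_i\}$, $a_i\tilde\ast a_j=\pi(A_i\ast A_j)$, $\tilde u(a_i)=\pi(u(A_i))$, $\tilde d(a_i)=\pi(d(A_i))$ (these are well defined, each image being a single block). For $\psi\in\operatorname{Hom}(\operatorname{GLR}(K),\widetilde X)$, $\operatorname{Lift}(\psi)=\{\phi\in\operatorname{Hom}(\operatorname{GLR}(K),X):\pi\circ\phi=\psi\}$. Legendrian knots in $(\mathbb{R}^3,\xi_{\mathrm{std}})$ are represented by oriented front diagrams. The fundamental GL-rack $\operatorname{GLR}(K)$ is the GL-rack generated by the arcs of a front diagram $D$ of $K$ subject to: following the orientation through a cusp, the generator changes by $u$ (cusp traversed upward) or $d$ (traversed downward); at a crossing with over-arc $y$, the under-arc $x$ on the right of the oriented over-strand and the under-arc $z$ on its left satisfy $z=x\ast y$. For a finite GL-rack $Y$, $\operatorname{Col}_Y(K)=|\operatorname{Hom}(\operatorname{GLR}(K),Y)|$, the number of colorings of $D$ by $Y$ obeying these rules; it is a Legendrian isotopy invariant. *)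

theory Defs
  imports "HOL-Library.FuncSet"
begin

definition gl_rack :: "'a set \<Rightarrow> ('a \<Rightarrow> 'a \<Rightarrow> 'a) \<Rightarrow> ('a \<Rightarrow> 'a) \<Rightarrow> ('a \<Rightarrow> 'a) \<Rightarrow> bool" where
  "gl_rack X opr u d \<longleftrightarrow>
     (\<forall>x\<in>X. \<forall>y\<in>X. opr x y \<in> X) \<and> (\<forall>x\<in>X. u x \<in> X) \<and> (\<forall>x\<in>X. d x \<in> X) \<and>
     (\<forall>y\<in>X. bij_betw (\<lambda>x. opr x y) X X) \<and>
     (\<forall>x\<in>X. \<forall>y\<in>X. \<forall>z\<in>X. opr (opr x y) z = opr (opr x z) (opr y z)) \<and>
     (\<forall>x\<in>X. u (d (opr x x)) = x \<and> d (u (opr x x)) = x) \<and>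
     (\<forall>x\<in>X. \<forall>y\<in>X. u (opr x y) = opr (u x) y \<and> d (opr x y) = opr (d x) y) \<and>
     (\<forall>x\<in>X. \<forall>y\<in>X. opr x (u y) = opr x y \<and> opr x (d y) = opr x y)"

definition diag :: "('a \<Rightarrow> 'a \<Rightarrow> 'a) \<Rightarrow> 'a \<Rightarrow> 'a" where
  "diag opr x = opr x x"

definition block_of :: "('a \<Rightarrow> 'a \<Rightarrow> 'a) \<Rightarrow> 'a \<Rightarrow> 'a set" where
  "block_of opr x = {(diag opr ^^ k) x | k. True}"

definition blocks :: "'a set \<Rightarrow> ('a \<Rightarrow> 'a \<Rightarrow> 'a) \<Rightarrow> 'a set set" where
  "blocks X opr = block_of opr ` X"

definition block_gl_rack :: "'a set \<Rightarrow> ('a \<Rightarrow> 'a \<Rightarrow> 'a) \<Rightarrow> ('a \<Rightarrow> 'a) \<Rightarrow> ('a \<Rightarrow> 'a) \<Rightarrow> nat \<Rightarrow> bool" where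
  "block_gl_rack X opr u d c \<longleftrightarrow> gl_rack X opr u d \<and> finite X \<and>
      (\<forall>x\<in>X. card (block_of opr x) = c)"

text \<open>Induced GL-quandle: its elements are the blocks; the projection sends x to its block.
  Operations: A \<star> B = \<pi>(A*B), u(A) = \<pi>(u(A)), d(A) = \<pi>(d(A)), where \<pi>(S) is the
  (single) block containing the image set.\<close>

definition proj :: "('a \<Rightarrow> 'a \<Rightarrow> 'a) \<Rightarrow> 'a \<Rightarrow> 'a set" where
  "proj opr x = block_of opr x"

definition ind_op :: "('a \<Rightarrow> 'a \<Rightarrow> 'a) \<Rightarrow> 'a set \<Rightarrow> 'a set \<Rightarrow> 'a set" where
  "ind_op opr A B = (THE C. proj opr ` {opr a b | a b. a \<in> A \<and> b \<in> B} = {C})"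

definition ind_un :: "('a \<Rightarrow> 'a \<Rightarrow> 'a) \<Rightarrow> ('a \<Rightarrow> 'a) \<Rightarrow> 'a set \<Rightarrow> 'a set" where
  "ind_un opr f A = (THE C. proj opr ` (f ` A) = {C})"

text \<open>An oriented front diagram of a knot with m arcs is encoded by a list D of length m:
  the arcs are numbered 0,...,m-1 in the order met when following the orientation, and
  D!i describes how arc i passes to arc (i+1) mod m:
  \<^item> CuspUp / CuspDown: through a cusp traversed upward / downward;
  \<^item> UnderRL k: passing under the over-arc k from its right side to its left side;
  \<^item> UnderLR k: passing under the over-arc k from its left side to its right side.\<close>

datatype transition = CuspUp | CuspDown | UnderRL nat | UnderLR nat

definition front_wf :: "transition list \<Rightarrow> bool" where
  "front_wf D \<longleftrightarrow> D \<noteq> [] \<and>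
     (\<forall>i<length D. \<forall>k. (D!i = UnderRL k \<or> D!i = UnderLR k) \<longrightarrow> k < length D)"

definition coloring_ok :: "transition list \<Rightarrow> ('b \<Rightarrow> 'b \<Rightarrow> 'b) \<Rightarrow> ('b \<Rightarrow> 'b) \<Rightarrow> ('b \<Rightarrow> 'b)
    \<Rightarrow> (nat \<Rightarrow> 'b) \<Rightarrow> bool" where
  "coloring_ok D opr u d f \<longleftrightarrow>
     (\<forall>i<length D. let j = Suc i mod length D in
        (case D!i of
           CuspUp \<Rightarrow> f j = u (f i)
         | CuspDown \<Rightarrow> f j = d (f i)
         | UnderRL k \<Rightarrow> f j = opr (f i) (f k)
         | UnderLR k \<Rightarrow> f i = opr (f j) (f k)))"

text \<open>Hom(GLR(K), Y), identified with the set of colorings of the arcs by Y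
  (functions extensional outside the arc set).\<close>

definition Hom :: "transition list \<Rightarrow> 'b set \<Rightarrow> ('b \<Rightarrow> 'b \<Rightarrow> 'b) \<Rightarrow> ('b \<Rightarrow> 'b) \<Rightarrow> ('b \<Rightarrow> 'b)
    \<Rightarrow> (nat \<Rightarrow> 'b) set" where
  "Hom D Y opr u d = {f \<in> {..<length D} \<rightarrow>\<^sub>E Y. coloring_ok D opr u d f}"

definition Col :: "transition list \<Rightarrow> 'b set \<Rightarrow> ('b \<Rightarrow> 'b \<Rightarrow> 'b) \<Rightarrow> ('b \<Rightarrow> 'b) \<Rightarrow> ('b \<Rightarrow> 'b) \<Rightarrow> nat" where
  "Col D Y opr u d = card (Hom D Y opr u d)"

definition proj_hom :: "transition list \<Rightarrow> ('a \<Rightarrow> 'a \<Rightarrow> 'a) \<Rightarrow> (nat \<Rightarrow> 'a) \<Rightarrow> (nat \<Rightarrow> 'a set)" where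
  "proj_hom D opr \<phi> = restrict (proj opr \<circ> \<phi>) {..<length D}"

definition Lift :: "transition list \<Rightarrow> 'a set \<Rightarrow> ('a \<Rightarrow> 'a \<Rightarrow> 'a) \<Rightarrow> ('a \<Rightarrow> 'a) \<Rightarrow> ('a \<Rightarrow> 'a)
    \<Rightarrow> (nat \<Rightarrow> 'a set) \<Rightarrow> (nat \<Rightarrow> 'a) set" where
  "Lift D X opr u d \<psi> = {\<phi> \<in> Hom D X opr u d. proj_hom D opr \<phi> = \<psi>}"

end

theory Submission
  imports Defs
begin

lemma glr_cl:
  assumes "gl_rack X opr u d" "x \<in> X" "y \<in> X"
  shows "opr x y \<in> X" "u x \<in> X" "d x \<in> X"
  using assms unfolding gl_rack_def by auto

lemma diag_in: "gl_rack X opr u d \<Longrightarrow> x \<in> X \<Longrightarrow> diag opr x \<in> X"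
  unfolding diag_def by (rule glr_cl)

lemma fdiag_in: "gl_rack X opr u d \<Longrightarrow> x \<in> X \<Longrightarrow> (diag opr ^^ k) x \<in> X"
  by (induction k) (auto intro: diag_in)

lemma diag_right:
  assumes g: "gl_rack X opr u d" and x: "x \<in> X" and y: "y \<in> X"
  shows "opr x (diag opr y) = opr x y"
proof -
  have dy: "diag opr y \<in> X" using g y by (rule diag_in)
  have z: "d (diag opr y) \<in> X" using glr_cl(3)[OF g dy dy] .
  have uz: "u (d (diag opr y)) = y" using g y unfolding gl_rack_def diag_def by auto
  have "opr x (u (d (diag opr y))) = opr x (d (diag opr y))" using g x z unfolding gl_rack_def by auto
  also have "\<dots> = opr x (diag opr y)" using g x dy unfolding gl_rack_def by auto
  finally show ?thesis using uz by simp
qed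

lemma fdiag_right:
  assumes g: "gl_rack X opr u d" and x: "x \<in> X" and y: "y \<in> X"
  shows "opr x ((diag opr ^^ k) y) = opr x y"
  by (induction k) (simp_all add: diag_right[OF g x fdiag_in[OF g y]])

lemma diag_op:
  assumes g: "gl_rack X opr u d" and x: "x \<in> X" and y: "y \<in> X"
  shows "diag opr (opr x y) = opr (diag opr x) y"
  using g x y unfolding gl_rack_def diag_def by metis

lemma fdiag_op:
  assumes g: "gl_rack X opr u d" and x: "x \<in> X" and y: "y \<in> X"
  shows "(diag opr ^^ k) (opr x y) = opr ((diag opr ^^ k) x) y"
  by (induction k) (simp_all add: diag_op[OF g fdiag_in[OF g x] y])

lemma fdiag_op2:
  assumes g: "gl_rack X opr u d" and x: "x \<in> X" and y: "y \<in> X"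
  shows "(diag opr ^^ k) (opr x y) = opr ((diag opr ^^ k) x) ((diag opr ^^ k) y)"
  using fdiag_op[OF g x y] fdiag_right[OF g fdiag_in[OF g x] y] by simp

lemma diag_u:
  assumes g: "gl_rack X opr u d" and x: "x \<in> X"
  shows "diag opr (u x) = u (diag opr x)" "diag opr (d x) = d (diag opr x)"
proof -
  have ux: "u x \<in> X" "d x \<in> X" using glr_cl[OF g x x] by auto
  show "diag opr (u x) = u (diag opr x)" using g x ux unfolding gl_rack_def diag_def by metis
  show "diag opr (d x) = d (diag opr x)" using g x ux unfolding gl_rack_def diag_def by metis
qed

lemma fdiag_u:
  assumes g: "gl_rack X opr u d" and x: "x \<in> X"
  shows "(diag opr ^^ k) (u x) = u ((diag opr ^^ k) x)" "(diag opr ^^ k) (d x) = d ((diag opr ^^ k) x)"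
  by (induction k) (simp_all add: diag_u[OF g fdiag_in[OF g x]])

lemma diag_inj:
  assumes g: "gl_rack X opr u d" and x: "x \<in> X" and y: "y \<in> X" and e: "diag opr x = diag opr y"
  shows "x = y"
proof -
  have "x = u (d (diag opr x))" "y = u (d (diag opr y))" using g x y unfolding gl_rack_def diag_def by auto
  thus ?thesis using e by simp
qed

lemma fdiag_inj:
  assumes g: "gl_rack X opr u d" and x: "x \<in> X" and y: "y \<in> X"
  shows "(diag opr ^^ k) x = (diag opr ^^ k) y \<Longrightarrow> x = y"
proof (induction k)
  case 0 then show ?case by simp
next
  case (Suc k)
  then show ?case using diag_inj[OF g fdiag_in[OF g x] fdiag_in[OF g y], of k k] by simp
qed

lemma period:
  assumes g: "gl_rack X opr u d" and f: "finite X" and x: "x \<in> X"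
  shows "\<exists>p>0. (diag opr ^^ p) x = x"
proof -
  let ?h = "\<lambda>k. (diag opr ^^ k) x"
  have sub: "?h ` {..card X} \<subseteq> X" using fdiag_in[OF g x] by auto
  have "\<not> inj_on ?h {..card X}"
  proof
    assume "inj_on ?h {..card X}"
    then have "card (?h ` {..card X}) = Suc (card X)" by (simp add: card_image)
    moreover have "card (?h ` {..card X}) \<le> card X" using card_mono[OF f sub] .
    ultimately show False by simp
  qed
  then obtain i j where ij: "i \<noteq> j" "?h i = ?h j" unfolding inj_on_def by auto
  have key: "\<exists>p>0. ?h p = x" if "i < j" "?h i = ?h j" for i j
  proof -
    have "?h j = (diag opr ^^ i) ((diag opr ^^ (j - i)) x)"
      using that by (metis comp_apply funpow_add le_add_diff_inverse less_imp_le)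
    then have "(diag opr ^^ i) x = (diag opr ^^ i) ((diag opr ^^ (j - i)) x)" using that by simp
    then have "x = (diag opr ^^ (j - i)) x" using fdiag_inj[OF g x fdiag_in[OF g x]] by blast
    then show ?thesis using that by (intro exI[of _ "j - i"]) auto
  qed
  show ?thesis
  proof (cases "i < j")
    case True then show ?thesis using key ij by blast
  next
    case False then have "j < i" using ij by simp
    then show ?thesis using key ij by metis
  qed
qed

lemma period_mult:
  assumes "(diag opr ^^ p) x = x"
  shows "(diag opr ^^ (m * p)) x = x"
proof (induction m)
  case 0 then show ?case by simp
next
  case (Suc m)
  have "(diag opr ^^ (Suc m * p)) x = (diag opr ^^ p) ((diag opr ^^ (m * p)) x)"
    by (simp add: funpow_add)
  then show ?case using Suc assms by simp
qed

lemma block_shift: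
  assumes g: "gl_rack X opr u d" and f: "finite X" and x: "x \<in> X"
  shows "block_of opr ((diag opr ^^ k) x) = block_of opr x"
proof
  show "block_of opr ((diag opr ^^ k) x) \<subseteq> block_of opr x"
    unfolding block_of_def by (auto simp del: funpow.simps) (metis comp_apply funpow_add)
next
  obtain p where p: "p > 0" "(diag opr ^^ p) x = x" using period[OF g f x] by blast
  show "block_of opr x \<subseteq> block_of opr ((diag opr ^^ k) x)"
  proof
    fix y assume "y \<in> block_of opr x"
    then obtain j where y: "y = (diag opr ^^ j) x" unfolding block_of_def by auto
    have kp: "k \<le> k * p" using p by simp
    have "y = (diag opr ^^ j) ((diag opr ^^ (k * p)) x)" using y period_mult[OF p(2)] by simp
    also have "\<dots> = (diag opr ^^ (j + k * p - k)) ((diag opr ^^ k) x)"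
      using kp by (metis comp_apply funpow_add le_add_diff_inverse2 add_diff_assoc)
    finally show "y \<in> block_of opr ((diag opr ^^ k) x)" unfolding block_of_def by blast
  qed
qed

lemma self_in_block: "x \<in> block_of opr x"
  unfolding block_of_def by (auto intro: exI[of _ 0])

lemma block_eq:
  assumes g: "gl_rack X opr u d" and f: "finite X" and x: "x \<in> X" and y: "y \<in> block_of opr x"
  shows "block_of opr y = block_of opr x"
  using y block_shift[OF g f x] unfolding block_of_def[of opr x] by auto

lemma ind_un_block:
  assumes g: "gl_rack X opr u d" and f: "finite X" and x: "x \<in> X" and hx: "h x \<in> X"
    and hc: "\<And>k. (diag opr ^^ k) (h x) = h ((diag opr ^^ k) x)"
  shows "ind_un opr h (block_of opr x) = block_of opr (h x)"
proof -
  have S: "proj opr ` (h ` block_of opr x) = {block_of opr (h x)}"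
  proof (rule equalityI)
    show "proj opr ` (h ` block_of opr x) \<subseteq> {block_of opr (h x)}"
    proof
      fix z assume "z \<in> proj opr ` (h ` block_of opr x)"
      then obtain k where "z = block_of opr (h ((diag opr ^^ k) x))"
        unfolding proj_def block_of_def[of opr x] by auto
      then have "z = block_of opr ((diag opr ^^ k) (h x))" using hc by simp
      then show "z \<in> {block_of opr (h x)}" using block_shift[OF g f hx] by simp
    qed
  next
    show "{block_of opr (h x)} \<subseteq> proj opr ` (h ` block_of opr x)"
      using self_in_block[of x opr] unfolding proj_def by auto
  qed
  show ?thesis unfolding ind_un_def S by simp
qed

lemma ind_op_block:
  assumes g: "gl_rack X opr u d" and f: "finite X" and x: "x \<in> X" and y: "y \<in> X"
  shows "ind_op opr (block_of opr x) (block_of opr y) = block_of opr (opr x y)"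
proof -
  have xy: "opr x y \<in> X" using glr_cl[OF g x y] by simp
  have S: "proj opr ` {opr a b | a b. a \<in> block_of opr x \<and> b \<in> block_of opr y} = {block_of opr (opr x y)}"
  proof (rule equalityI)
    show "proj opr ` {opr a b | a b. a \<in> block_of opr x \<and> b \<in> block_of opr y} \<subseteq> {block_of opr (opr x y)}"
    proof
      fix z assume "z \<in> proj opr ` {opr a b | a b. a \<in> block_of opr x \<and> b \<in> block_of opr y}"
      then obtain k l where "z = block_of opr (opr ((diag opr ^^ k) x) ((diag opr ^^ l) y))"
        unfolding proj_def block_of_def[of opr x] block_of_def[of opr y] by auto
      then have "z = block_of opr ((diag opr ^^ k) (opr x y))"
        using fdiag_right[OF g fdiag_in[OF g x] y] fdiag_op[OF g x y] by simp
      then show "z \<in> {block_of opr (opr x y)}" using block_shift[OF g f xy] by simp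
    qed
  next
    show "{block_of opr (opr x y)} \<subseteq> proj opr ` {opr a b | a b. a \<in> block_of opr x \<and> b \<in> block_of opr y}"
      using self_in_block[of x opr] self_in_block[of y opr] unfolding proj_def by auto
  qed
  show ?thesis unfolding ind_op_def S by simp
qed

lemma col_at:
  assumes "coloring_ok D opr u d f" "i < length D"
  shows "case D!i of CuspUp \<Rightarrow> f (Suc i mod length D) = u (f i)
         | CuspDown \<Rightarrow> f (Suc i mod length D) = d (f i)
         | UnderRL k \<Rightarrow> f (Suc i mod length D) = opr (f i) (f k)
         | UnderLR k \<Rightarrow> f i = opr (f (Suc i mod length D)) (f k)"
  using assms unfolding coloring_ok_def Let_def by auto

lemma homD:
  assumes "f \<in> Hom D X opr u d"
  shows "\<And>i. i < length D \<Longrightarrow> f i \<in> X" "coloring_ok D opr u d f" "f \<in> {..<length D} \<rightarrow>\<^sub>E X"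
  using assms unfolding Hom_def by (auto simp: PiE_iff)

lemma wf_k:
  assumes "front_wf D" "i < length D"
  shows "D!i = UnderRL k \<Longrightarrow> k < length D" "D!i = UnderLR k \<Longrightarrow> k < length D"
  using assms unfolding front_wf_def by blast+

lemma proj_hom_in:
  assumes wf: "front_wf D" and g: "gl_rack X opr u d" and fin: "finite X"
    and ph: "\<phi> \<in> Hom D X opr u d"
  shows "proj_hom D opr \<phi> \<in> Hom D (blocks X opr) (ind_op opr) (ind_un opr u) (ind_un opr d)"
proof -
  have pX: "\<And>i. i < length D \<Longrightarrow> \<phi> i \<in> X" using homD(1)[OF ph] .
  have len: "0 < length D" using wf unfolding front_wf_def by simp
  have pi: "proj_hom D opr \<phi> \<in> {..<length D} \<rightarrow>\<^sub>E blocks X opr"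
    unfolding proj_hom_def blocks_def proj_def using pX by auto
  have "coloring_ok D (ind_op opr) (ind_un opr u) (ind_un opr d) (proj_hom D opr \<phi>)"
    unfolding coloring_ok_def Let_def
  proof (intro allI impI)
    fix i assume i: "i < length D"
    define j where "j = Suc i mod length D"
    have j: "j < length D" using len by (simp add: j_def)
    have C: "case D!i of CuspUp \<Rightarrow> \<phi> j = u (\<phi> i)
         | CuspDown \<Rightarrow> \<phi> j = d (\<phi> i)
         | UnderRL k \<Rightarrow> \<phi> j = opr (\<phi> i) (\<phi> k)
         | UnderLR k \<Rightarrow> \<phi> i = opr (\<phi> j) (\<phi> k)"
      using col_at[OF homD(2)[OF ph] i] unfolding j_def .
    have xi: "\<phi> i \<in> X" and xj: "\<phi> j \<in> X" using pX i j by auto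
    show "case D!i of CuspUp \<Rightarrow> proj_hom D opr \<phi> (Suc i mod length D) = ind_un opr u (proj_hom D opr \<phi> i)
         | CuspDown \<Rightarrow> proj_hom D opr \<phi> (Suc i mod length D) = ind_un opr d (proj_hom D opr \<phi> i)
         | UnderRL k \<Rightarrow> proj_hom D opr \<phi> (Suc i mod length D) = ind_op opr (proj_hom D opr \<phi> i) (proj_hom D opr \<phi> k)
         | UnderLR k \<Rightarrow> proj_hom D opr \<phi> i = ind_op opr (proj_hom D opr \<phi> (Suc i mod length D)) (proj_hom D opr \<phi> k)"
    proof (cases "D!i")
      case CuspUp
      have "ind_un opr u (block_of opr (\<phi> i)) = block_of opr (u (\<phi> i))"
        by (rule ind_un_block[where h=u, OF g fin xi glr_cl(2)[OF g xi xi] fdiag_u(1)[OF g xi]])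
      then show ?thesis using CuspUp C i j by (simp add: j_def[symmetric] proj_hom_def proj_def)
    next
      case CuspDown
      have "ind_un opr d (block_of opr (\<phi> i)) = block_of opr (d (\<phi> i))"
        by (rule ind_un_block[where h=d, OF g fin xi glr_cl(3)[OF g xi xi] fdiag_u(2)[OF g xi]])
      then show ?thesis using CuspDown C i j by (simp add: j_def[symmetric] proj_hom_def proj_def)
    next
      case (UnderRL k)
      have k: "k < length D" using wf_k[OF wf i] UnderRL by simp
      then have xk: "\<phi> k \<in> X" using pX by simp
      show ?thesis using UnderRL C i j k ind_op_block[OF g fin xi xk]
        by (simp add: j_def[symmetric] proj_hom_def proj_def)
    next
      case (UnderLR k)
      have k: "k < length D" using wf_k[OF wf i] UnderLR by simp
      then have xk: "\<phi> k \<in> X" using pX by simp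
      show ?thesis using UnderLR C i j k ind_op_block[OF g fin xj xk]
        by (simp add: j_def[symmetric] proj_hom_def proj_def)
    qed
  qed
  then show ?thesis using pi unfolding Hom_def by simp
qed

lemma same_block_right:
  assumes g: "gl_rack X opr u d" and fin: "finite X" and x: "x \<in> X" and a: "a \<in> X" and b: "b \<in> X"
    and e: "block_of opr a = block_of opr b"
  shows "opr x a = opr x b"
proof -
  have "a \<in> block_of opr b" using self_in_block[of a opr] e by simp
  then obtain m where "a = (diag opr ^^ m) b" unfolding block_of_def by auto
  then show ?thesis using fdiag_right[OF g x b] by simp
qed

lemma lift_unique:
  assumes wf: "front_wf D" and g: "gl_rack X opr u d" and fin: "finite X"
    and f: "f \<in> Hom D X opr u d" and h: "h \<in> Hom D X opr u d"
    and bl: "\<And>i. i < length D \<Longrightarrow> block_of opr (f i) = block_of opr (h i)"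
    and z: "f 0 = h 0"
  shows "i < length D \<Longrightarrow> f i = h i"
proof (induction i)
  case 0 then show ?case using z by simp
next
  case (Suc i)
  have i: "i < length D" using Suc.prems by simp
  have fi: "f i = h i" using Suc.IH i by simp
  have smod: "Suc i mod length D = Suc i" using Suc.prems by simp
  have Cf: "case D!i of CuspUp \<Rightarrow> f (Suc i) = u (f i)
         | CuspDown \<Rightarrow> f (Suc i) = d (f i)
         | UnderRL k \<Rightarrow> f (Suc i) = opr (f i) (f k)
         | UnderLR k \<Rightarrow> f i = opr (f (Suc i)) (f k)"
    using col_at[OF homD(2)[OF f] i] unfolding smod .
  have Ch: "case D!i of CuspUp \<Rightarrow> h (Suc i) = u (h i)
         | CuspDown \<Rightarrow> h (Suc i) = d (h i)
         | UnderRL k \<Rightarrow> h (Suc i) = opr (h i) (h k)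
         | UnderLR k \<Rightarrow> h i = opr (h (Suc i)) (h k)"
    using col_at[OF homD(2)[OF h] i] unfolding smod .
  have fX: "\<And>j. j < length D \<Longrightarrow> f j \<in> X" using homD(1)[OF f] .
  have hX: "\<And>j. j < length D \<Longrightarrow> h j \<in> X" using homD(1)[OF h] .
  show ?case
  proof (cases "D!i")
    case CuspUp then show ?thesis using Cf Ch fi by simp
  next
    case CuspDown then show ?thesis using Cf Ch fi by simp
  next
    case (UnderRL k)
    have k: "k < length D" using wf_k[OF wf i] UnderRL by simp
    have "opr (h i) (h k) = opr (h i) (f k)"
      using same_block_right[OF g fin hX[OF i] hX[OF k] fX[OF k]] bl[OF k] by simp
    then show ?thesis using UnderRL Cf Ch fi by simp
  next
    case (UnderLR k)
    have k: "k < length D" using wf_k[OF wf i] UnderLR by simp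
    have "opr (h (Suc i)) (h k) = opr (h (Suc i)) (f k)"
      using same_block_right[OF g fin hX[OF Suc.prems] hX[OF k] fX[OF k]] bl[OF k] by simp
    then have e: "opr (f (Suc i)) (f k) = opr (h (Suc i)) (f k)" using UnderLR Cf Ch fi by simp
    have "bij_betw (\<lambda>x. opr x (f k)) X X" using g fX[OF k] unfolding gl_rack_def by blast
    then have "inj_on (\<lambda>x. opr x (f k)) X" by (rule bij_betw_imp_inj_on)
    then show ?thesis using e fX[OF Suc.prems] hX[OF Suc.prems] unfolding inj_on_def by blast
  qed
qed

lemma shift_hom:
  assumes wf: "front_wf D" and g: "gl_rack X opr u d" and fin: "finite X"
    and ph: "\<phi> \<in> Hom D X opr u d"
  shows "restrict (\<lambda>i. (diag opr ^^ m) (\<phi> i)) {..<length D} \<in> Hom D X opr u d"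
    and "proj_hom D opr (restrict (\<lambda>i. (diag opr ^^ m) (\<phi> i)) {..<length D}) = proj_hom D opr \<phi>"
proof -
  let ?f = "restrict (\<lambda>i. (diag opr ^^ m) (\<phi> i)) {..<length D}"
  have pX: "\<And>i. i < length D \<Longrightarrow> \<phi> i \<in> X" using homD(1)[OF ph] .
  have len: "0 < length D" using wf unfolding front_wf_def by simp
  have pi: "?f \<in> {..<length D} \<rightarrow>\<^sub>E X" using pX fdiag_in[OF g] by auto
  have "coloring_ok D opr u d ?f"
    unfolding coloring_ok_def Let_def
  proof (intro allI impI)
    fix i assume i: "i < length D"
    define j where "j = Suc i mod length D"
    have j: "j < length D" using len by (simp add: j_def)
    have C: "case D!i of CuspUp \<Rightarrow> \<phi> j = u (\<phi> i)
         | CuspDown \<Rightarrow> \<phi> j = d (\<phi> i)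
         | UnderRL k \<Rightarrow> \<phi> j = opr (\<phi> i) (\<phi> k)
         | UnderLR k \<Rightarrow> \<phi> i = opr (\<phi> j) (\<phi> k)"
      using col_at[OF homD(2)[OF ph] i] unfolding j_def .
    have xi: "\<phi> i \<in> X" and xj: "\<phi> j \<in> X" using pX i j by auto
    show "case D!i of CuspUp \<Rightarrow> ?f (Suc i mod length D) = u (?f i)
         | CuspDown \<Rightarrow> ?f (Suc i mod length D) = d (?f i)
         | UnderRL k \<Rightarrow> ?f (Suc i mod length D) = opr (?f i) (?f k)
         | UnderLR k \<Rightarrow> ?f i = opr (?f (Suc i mod length D)) (?f k)"
    proof (cases "D!i")
      case CuspUp
      then show ?thesis using C i j fdiag_u(1)[OF g xi, of m] by (simp add: j_def[symmetric])
    next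
      case CuspDown
      then show ?thesis using C i j fdiag_u(2)[OF g xi, of m] by (simp add: j_def[symmetric])
    next
      case (UnderRL k)
      have k: "k < length D" using wf_k[OF wf i] UnderRL by simp
      then have xk: "\<phi> k \<in> X" using pX by simp
      show ?thesis using UnderRL C i j k fdiag_op2[OF g xi xk, of m]
        by (simp add: j_def[symmetric])
    next
      case (UnderLR k)
      have k: "k < length D" using wf_k[OF wf i] UnderLR by simp
      then have xk: "\<phi> k \<in> X" using pX by simp
      show ?thesis using UnderLR C i j k fdiag_op2[OF g xj xk, of m]
        by (simp add: j_def[symmetric])
    qed
  qed
  then show "?f \<in> Hom D X opr u d" using pi unfolding Hom_def by simp
  show "proj_hom D opr ?f = proj_hom D opr \<phi>"
    unfolding proj_hom_def proj_def using block_shift[OF g fin pX] by (auto intro!: ext)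
qed

lemma lift_card:
  assumes wf: "front_wf D" and g: "gl_rack X opr u d" and fin: "finite X"
    and cX: "\<forall>x\<in>X. card (block_of opr x) = c"
    and ne: "Lift D X opr u d \<psi> \<noteq> {}"
  shows "card (Lift D X opr u d \<psi>) = c"
proof -
  obtain \<phi> where ph: "\<phi> \<in> Lift D X opr u d \<psi>" using ne by blast
  have phH: "\<phi> \<in> Hom D X opr u d" and phP: "proj_hom D opr \<phi> = \<psi>" using ph unfolding Lift_def by auto
  have len: "0 < length D" using wf unfolding front_wf_def by simp
  have x0: "\<phi> 0 \<in> X" using homD(1)[OF phH len] .
  have ph_blk: "\<And>f i. f \<in> Lift D X opr u d \<psi> \<Longrightarrow> i < length D \<Longrightarrow> block_of opr (f i) = block_of opr (\<phi> i)"
  proof -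
    fix f i assume f: "f \<in> Lift D X opr u d \<psi>" and i: "i < length D"
    have "proj_hom D opr f i = proj_hom D opr \<phi> i" using f phP unfolding Lift_def by auto
    then show "block_of opr (f i) = block_of opr (\<phi> i)" using i unfolding proj_hom_def proj_def by simp
  qed
  have "bij_betw (\<lambda>f. f 0) (Lift D X opr u d \<psi>) (block_of opr (\<phi> 0))"
  proof (rule bij_betw_imageI)
    show "inj_on (\<lambda>f. f 0) (Lift D X opr u d \<psi>)"
    proof (rule inj_onI)
      fix f h assume f: "f \<in> Lift D X opr u d \<psi>" and h: "h \<in> Lift D X opr u d \<psi>" and e: "f 0 = h 0"
      have fH: "f \<in> Hom D X opr u d" and hH: "h \<in> Hom D X opr u d" using f h unfolding Lift_def by auto
      have "\<And>i. i < length D \<Longrightarrow> f i = h i"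
        using lift_unique[OF wf g fin fH hH _ e] ph_blk[OF f] ph_blk[OF h] by simp
      then show "f = h" using PiE_ext[OF homD(3)[OF fH] homD(3)[OF hH]] by simp
    qed
  next
    show "(\<lambda>f. f 0) ` Lift D X opr u d \<psi> = block_of opr (\<phi> 0)"
    proof (rule equalityI)
      show "(\<lambda>f. f 0) ` Lift D X opr u d \<psi> \<subseteq> block_of opr (\<phi> 0)"
        using ph_blk[OF _ len] self_in_block by fastforce
    next
      show "block_of opr (\<phi> 0) \<subseteq> (\<lambda>f. f 0) ` Lift D X opr u d \<psi>"
      proof
        fix y assume "y \<in> block_of opr (\<phi> 0)"
        then obtain m where y: "y = (diag opr ^^ m) (\<phi> 0)" unfolding block_of_def by auto
        let ?f = "restrict (\<lambda>i. (diag opr ^^ m) (\<phi> i)) {..<length D}"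
        have "?f \<in> Lift D X opr u d \<psi>" using shift_hom[OF wf g fin phH, of m] phP unfolding Lift_def by simp
        moreover have "?f 0 = y" using y len by simp
        ultimately show "y \<in> (\<lambda>f. f 0) ` Lift D X opr u d \<psi>" by (metis (no_types, lifting) image_eqI)
      qed
    qed
  qed
  then have "card (Lift D X opr u d \<psi>) = card (block_of opr (\<phi> 0))" by (rule bij_betw_same_card)
  then show ?thesis using cX x0 by simp
qed

theorem theorem3p11:
  fixes D :: "transition list"
    and X :: "'a set" and opr :: "'a \<Rightarrow> 'a \<Rightarrow> 'a" and u d :: "'a \<Rightarrow> 'a" and c :: nat
  assumes "front_wf D"
    and "block_gl_rack X opr u d c"
  shows "(\<forall>\<phi>\<in>Hom D X opr u d.
            proj_hom D opr \<phi> \<in> Hom D (blocks X opr) (ind_op opr) (ind_un opr u) (ind_un opr d))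
       \<and> Col D X opr u d =
           (\<Sum>\<psi>\<in>Hom D (blocks X opr) (ind_op opr) (ind_un opr u) (ind_un opr d).
               card (Lift D X opr u d \<psi>))
       \<and> (\<forall>\<psi>\<in>Hom D (blocks X opr) (ind_op opr) (ind_un opr u) (ind_un opr d).
               card (Lift D X opr u d \<psi>) \<in> {0, c})"
proof -
  have wf: "front_wf D" using assms(1) .
  have g: "gl_rack X opr u d" and fin: "finite X" and cX: "\<forall>x\<in>X. card (block_of opr x) = c"
    using assms(2) unfolding block_gl_rack_def by auto
  have P1: "\<forall>\<phi>\<in>Hom D X opr u d.
            proj_hom D opr \<phi> \<in> Hom D (blocks X opr) (ind_op opr) (ind_un opr u) (ind_un opr d)"
    using proj_hom_in[OF wf g fin] by blast
  have fH: "finite (Hom D X opr u d)"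
    by (rule finite_subset[OF _ finite_PiE[OF finite_lessThan fin]]) (unfold Hom_def, blast)
  have fB: "finite (blocks X opr)" unfolding blocks_def using fin by simp
  have fHB: "finite (Hom D (blocks X opr) (ind_op opr) (ind_un opr u) (ind_un opr d))"
    by (rule finite_subset[OF _ finite_PiE[OF finite_lessThan fB]]) (unfold Hom_def, blast)
  have "(\<Sum>\<psi>\<in>Hom D (blocks X opr) (ind_op opr) (ind_un opr u) (ind_un opr d).
            sum (\<lambda>_. 1::nat) {x. x \<in> Hom D X opr u d \<and> proj_hom D opr x = \<psi>})
        = sum (\<lambda>_. 1::nat) (Hom D X opr u d)"
    by (rule sum.group[OF fH fHB]) (use P1 in blast)
  then have P2: "Col D X opr u d =
           (\<Sum>\<psi>\<in>Hom D (blocks X opr) (ind_op opr) (ind_un opr u) (ind_un opr d).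
               card (Lift D X opr u d \<psi>))"
    unfolding Col_def Lift_def by simp
  have P3: "\<forall>\<psi>\<in>Hom D (blocks X opr) (ind_op opr) (ind_un opr u) (ind_un opr d).
               card (Lift D X opr u d \<psi>) \<in> {0, c}"
  proof
    fix \<psi> show "card (Lift D X opr u d \<psi>) \<in> {0, c}"
    proof (cases "Lift D X opr u d \<psi> = {}")
      case True then show ?thesis by simp
    next
      case False then show ?thesis using lift_card[OF wf g fin cX False] by simp
    qed
  qed
  show ?thesis using P1 P2 P3 by blast
qed

end
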